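(* Let $a,\varepsilon\in\mathbb{R}$ with $\frac{|a|}{\sqrt2}<\varepsilon<|a|$ or $-|a|<\varepsilon<-\frac{|a|}{\sqrt2}$. Let $X_-(x,y,z)=(y,\,-ay+x+az+\varepsilon,\,x)$, $X_+(x,y,z)=(y,\,-ay-x-az+\varepsilon,\,x)$, $P=\left(-\frac{\sqrt{a^2-\varepsilon^2}}{a},\frac{\varepsilon}{a},0\right)$, and let $x_{\alpha_\pm}(t)$ be the solution of $\dot{\mathbf x}=X_\pm(\mathbf x)$ with $x_{\alpha_\pm}(0)=P$. Set $$t_-=\ln\left(\frac{\sqrt{a^2-\varepsilon^2}+\varepsilon}{\varepsilon-\sqrt{a^2-\varepsilon^2}}\right),\qquad t_+=2\arctan\left(\frac{\sqrt{a^2-\varepsilon^2}}{\varepsilon}\right).$$ Then $\|x_{\alpha_-}(t)\|^2<1$ for $0<t<t_-$ and $\|x_{\alpha_+}(t)\|^2>1$ for $0<t<t_+$.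
   Context: $\|\cdot\|$ is the Euclidean norm on $\mathbb{R}^3$. *)

theory Defs
  imports "HOL-Analysis.Analysis"
begin

definition X_minus :: "real \<Rightarrow> real \<Rightarrow> real^3 \<Rightarrow> real^3" where
  "X_minus a \<epsilon> v = vector [v$2, - a * v$2 + v$1 + a * v$3 + \<epsilon>, v$1]"

definition X_plus :: "real \<Rightarrow> real \<Rightarrow> real^3 \<Rightarrow> real^3" where
  "X_plus a \<epsilon> v = vector [v$2, - a * v$2 - v$1 - a * v$3 + \<epsilon>, v$1]"

definition P_pt :: "real \<Rightarrow> real \<Rightarrow> real^3" where
  "P_pt a \<epsilon> = vector [- sqrt (a^2 - \<epsilon>^2) / a, \<epsilon> / a, 0]"

definition t_minus :: "real \<Rightarrow> real \<Rightarrow> real" where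
  "t_minus a \<epsilon> = ln ((sqrt (a^2 - \<epsilon>^2) + \<epsilon>) / (\<epsilon> - sqrt (a^2 - \<epsilon>^2)))"

definition t_plus :: "real \<Rightarrow> real \<Rightarrow> real" where
  "t_plus a \<epsilon> = 2 * arctan (sqrt (a^2 - \<epsilon>^2) / \<epsilon>)"

end

theory Submission
  imports Defs
begin


lemma cross_bound: "c * (2 * x * y) \<le> \<bar>c\<bar> * (x\<^sup>2 + y\<^sup>2)" for c x y :: real
proof -
  have "\<bar>2 * x * y\<bar> \<le> x\<^sup>2 + y\<^sup>2"
    using sum_squares_bound[of x y] sum_squares_bound[of "-x" y] by (auto simp: abs_if)
  then have "c * (2 * x * y) \<le> \<bar>c\<bar> * \<bar>2 * x * y\<bar>" by (simp add: abs_mult[symmetric])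
  also have "\<dots> \<le> \<bar>c\<bar> * (x\<^sup>2 + y\<^sup>2)" using \<open>\<bar>2 * x * y\<bar> \<le> _\<close> by (simp add: mult_left_mono)
  finally show ?thesis .
qed

lemma uniq3:
  fixes p q r :: "real \<Rightarrow> real"
  assumes dp: "\<And>t. (p has_real_derivative q t) (at t)"
    and dq: "\<And>t. (q has_real_derivative (ca * q t + cb * p t + cc * r t)) (at t)"
    and dr: "\<And>t. (r has_real_derivative p t) (at t)"
    and z: "p 0 = 0" "q 0 = 0" "r 0 = 0" and t: "0 \<le> t"
  shows "p t = 0 \<and> q t = 0 \<and> r t = 0"
proof -
  define K where "K = 2 + 2 * \<bar>ca\<bar> + \<bar>cb\<bar> + \<bar>cc\<bar>"
  define g where "g s = (p s)\<^sup>2 + (q s)\<^sup>2 + (r s)\<^sup>2" for s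
  define h where "h s = g s * exp (- K * s)" for s
  define g' where "g' s = 2 * p s * q s + 2 * q s * (ca * q s + cb * p s + cc * r s) + 2 * r s * p s" for s
  have dg: "(g has_real_derivative g' s) (at s)" for s
    unfolding g_def g'_def
    by (auto intro!: derivative_eq_intros dp dq dr simp: algebra_simps)
  have bound: "g' s \<le> K * g s" for s
  proof -
    have 1: "2 * p s * q s \<le> (p s)\<^sup>2 + (q s)\<^sup>2" by (rule sum_squares_bound)
    have 2: "2 * r s * p s \<le> (r s)\<^sup>2 + (p s)\<^sup>2" by (rule sum_squares_bound)
    have 3: "cb * (2 * p s * q s) \<le> \<bar>cb\<bar> * ((p s)\<^sup>2 + (q s)\<^sup>2)" by (rule cross_bound)
    have 4: "cc * (2 * q s * r s) \<le> \<bar>cc\<bar> * ((q s)\<^sup>2 + (r s)\<^sup>2)" by (rule cross_bound)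
    have 5: "ca * (2 * (q s)\<^sup>2) \<le> \<bar>ca\<bar> * (2 * (q s)\<^sup>2)" by (rule mult_right_mono) auto
    have "g' s = 2 * p s * q s + 2 * r s * p s + cb * (2 * p s * q s) + cc * (2 * q s * r s) + ca * (2 * (q s)\<^sup>2)"
      unfolding g'_def by (simp add: algebra_simps power2_eq_square)
    also have "\<dots> \<le> (p s)\<^sup>2 + (q s)\<^sup>2 + ((r s)\<^sup>2 + (p s)\<^sup>2) + \<bar>cb\<bar> * ((p s)\<^sup>2 + (q s)\<^sup>2) + \<bar>cc\<bar> * ((q s)\<^sup>2 + (r s)\<^sup>2) + \<bar>ca\<bar> * (2 * (q s)\<^sup>2)"
      using 1 2 3 4 5 by linarith
    also have "\<dots> \<le> K * g s"
    proof -
      have "0 \<le> (\<bar>cb\<bar> + 2 * \<bar>ca\<bar>) * (r s)\<^sup>2 + (\<bar>cc\<bar> + 2 * \<bar>ca\<bar>) * (p s)\<^sup>2 + 2 * (q s)\<^sup>2 + (r s)\<^sup>2 + (\<bar>ca\<bar> + \<bar>ca\<bar>) * 0"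
        by (intro add_nonneg_nonneg mult_nonneg_nonneg) auto
      then show ?thesis unfolding K_def g_def by (simp add: algebra_simps)
    qed
    finally show ?thesis .
  qed
  have dh: "(h has_real_derivative (g' s - K * g s) * exp (- K * s)) (at s)" for s
    unfolding h_def by (auto intro!: derivative_eq_intros dg simp: algebra_simps)
  have "h t \<le> h 0"
  proof (rule DERIV_nonpos_imp_nonincreasing[OF t])
    fix x assume "0 \<le> x" "x \<le> t"
    show "\<exists>y. (h has_real_derivative y) (at x) \<and> y \<le> 0"
      using dh[of x] bound[of x] by (intro exI[of _ "(g' x - K * g x) * exp (- K * x)"]) (auto intro!: mult_nonpos_nonneg)
  qed
  then have "g t * exp (- K * t) \<le> 0" unfolding h_def g_def using z by simp
  then have "g t \<le> 0" by (simp add: mult_le_0_iff)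
  then show ?thesis unfolding g_def
    by (smt (verit) zero_le_power2 zero_eq_power2)
qed



lemma minus_ident:
  fixes a e s u :: real
  assumes "a \<noteq> 0" "u > 0" "s\<^sup>2 = a\<^sup>2 - e\<^sup>2"
  shows "((((e-s)*u - (e+s)/u)/(2*a))\<^sup>2 + (((e-s)*u + (e+s)/u)/(2*a))\<^sup>2 + (((e-s)*u + (e+s)/u)/(2*a) - e/a)\<^sup>2 - 1) * (4*a\<^sup>2*u\<^sup>2)
    = (u-1)*((e-s)*u-(e+s))*(3*(e-s)*u\<^sup>2+2*e*u+3*(e+s))"
proof -
  have a2: "a\<^sup>2 = e\<^sup>2 + s\<^sup>2" using assms by simp
  have "((((e-s)*u - (e+s)/u)/(2*a))\<^sup>2 + (((e-s)*u + (e+s)/u)/(2*a))\<^sup>2 + (((e-s)*u + (e+s)/u)/(2*a) - e/a)\<^sup>2 - 1) * (4*a\<^sup>2*u\<^sup>2)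
     = ((e-s)*u\<^sup>2 - (e+s))\<^sup>2 + ((e-s)*u\<^sup>2 + (e+s))\<^sup>2 + ((e-s)*u\<^sup>2 + (e+s) - 2*e*u)\<^sup>2 - 4*a\<^sup>2*u\<^sup>2"
    using assms by (simp add: field_simps power2_eq_square)
  also have "\<dots> = (u-1)*((e-s)*u-(e+s))*(3*(e-s)*u\<^sup>2+2*e*u+3*(e+s))"
    unfolding a2 by (simp add: algebra_simps power2_eq_square)
  finally show ?thesis .
qed

lemma plus_ident:
  fixes a e s t :: real
  assumes "a \<noteq> 0" "s\<^sup>2 = a\<^sup>2 - e\<^sup>2"
  shows "((e * sin t - s * cos t)/a)\<^sup>2 + ((e * cos t + s * sin t)/a)\<^sup>2 + ((e - e * cos t - s * sin t)/a)\<^sup>2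
     = 1 + ((e * (1 - cos t) - s * sin t)/a)\<^sup>2"
proof -
  have a2: "a\<^sup>2 = e\<^sup>2 + s\<^sup>2" using assms by simp
  have sc: "(sin t)\<^sup>2 + (cos t)\<^sup>2 = 1" by simp
  have "(e * sin t - s * cos t)\<^sup>2 + (e * cos t + s * sin t)\<^sup>2 = a\<^sup>2"
    using a2 sc by algebra
  then show ?thesis using assms(1)
    by (simp add: power_divide field_simps)
qed



lemma comp_deriv:
  fixes f :: "real \<Rightarrow> real^'n"
  assumes "(f has_vector_derivative f') (at t)"
  shows "((\<lambda>t. f t $ i) has_real_derivative f' $ i) (at t)"
  using bounded_linear.has_vector_derivative[OF bounded_linear_vec_nth assms, of i]
  by (simp add: has_real_derivative_iff_has_vector_derivative)

lemma norm3: "(norm (v::real^3))\<^sup>2 = (v$1)\<^sup>2 + (v$2)\<^sup>2 + (v$3)\<^sup>2"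
  by (simp add: norm_vec_def L2_set_def sum_3)

lemma eps_facts:
  fixes a \<epsilon> :: real
  assumes heps: "(\<bar>a\<bar> / sqrt 2 < \<epsilon> \<and> \<epsilon> < \<bar>a\<bar>) \<or> (- \<bar>a\<bar> < \<epsilon> \<and> \<epsilon> < - \<bar>a\<bar> / sqrt 2)"
  shows "a \<noteq> 0 \<and> \<epsilon>\<^sup>2 < a\<^sup>2 \<and> a\<^sup>2 < 2 * \<epsilon>\<^sup>2"
proof -
  have s2: "sqrt 2 > 0" "(sqrt 2)\<^sup>2 = 2" by auto
  have "0 \<le> \<bar>a\<bar> / sqrt 2" by simp
  with heps have "\<bar>a\<bar> / sqrt 2 < \<bar>\<epsilon>\<bar> \<and> \<bar>\<epsilon>\<bar> < \<bar>a\<bar>" by linarith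
  then have 1: "\<bar>a\<bar> < \<bar>\<epsilon>\<bar> * sqrt 2" and 2: "\<bar>\<epsilon>\<bar> < \<bar>a\<bar>" using s2 by (auto simp: field_simps)
  have "\<bar>a\<bar>\<^sup>2 < (\<bar>\<epsilon>\<bar> * sqrt 2)\<^sup>2" using 1 by (intro power_strict_mono) auto
  then have "a\<^sup>2 < 2 * \<epsilon>\<^sup>2" using s2 by (simp add: power_mult_distrib)
  moreover have "\<bar>\<epsilon>\<bar>\<^sup>2 < \<bar>a\<bar>\<^sup>2" using 2 by (intro power_strict_mono) auto
  ultimately show ?thesis using 2 by auto
qed


theorem mainTheorem6:
  fixes a \<epsilon> :: real and xm xp :: "real \<Rightarrow> real^3"
  assumes heps: "(\<bar>a\<bar> / sqrt 2 < \<epsilon> \<and> \<epsilon> < \<bar>a\<bar>) \<or> (- \<bar>a\<bar> < \<epsilon> \<and> \<epsilon> < - \<bar>a\<bar> / sqrt 2)"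
    and xm_ode: "\<And>t. (xm has_vector_derivative X_minus a \<epsilon> (xm t)) (at t)"
    and xm_init: "xm 0 = P_pt a \<epsilon>"
    and xp_ode: "\<And>t. (xp has_vector_derivative X_plus a \<epsilon> (xp t)) (at t)"
    and xp_init: "xp 0 = P_pt a \<epsilon>"
  shows "(\<forall>t. 0 < t \<and> t < t_minus a \<epsilon> \<longrightarrow> (norm (xm t))^2 < 1)
       \<and> (\<forall>t. 0 < t \<and> t < t_plus a \<epsilon> \<longrightarrow> (norm (xp t))^2 > 1)"
proof -
  have ef: "a \<noteq> 0" "\<epsilon>\<^sup>2 < a\<^sup>2" "a\<^sup>2 < 2 * \<epsilon>\<^sup>2" using eps_facts[OF heps] by auto
  define s where "s = sqrt (a\<^sup>2 - \<epsilon>\<^sup>2)"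
  have s2: "s\<^sup>2 = a\<^sup>2 - \<epsilon>\<^sup>2" unfolding s_def using ef by simp
  have spos: "s > 0" unfolding s_def using ef by simp
  have sle: "s < \<bar>\<epsilon>\<bar>"
  proof -
    have "s\<^sup>2 < \<bar>\<epsilon>\<bar>\<^sup>2" using s2 ef by simp
    then show ?thesis using spos by (smt (verit) power_mono abs_ge_zero)
  qed
  show ?thesis
  proof (cases "\<epsilon> > 0")
    case False
    then have eneg: "\<epsilon> < 0" using sle spos by auto
    have tm: "t_minus a \<epsilon> \<le> 0"
    proof -
      have "(s + \<epsilon>) / (\<epsilon> - s) \<le> 1" using eneg spos sle by (simp add: divide_le_eq)
      moreover have "(s + \<epsilon>) / (\<epsilon> - s) > 0" using eneg spos sle by (simp add: divide_pos_neg zero_less_divide_iff)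
      ultimately show ?thesis unfolding t_minus_def s_def[symmetric] by simp
    qed
    have tp: "t_plus a \<epsilon> \<le> 0"
    proof -
      have "s / \<epsilon> < 0" using eneg spos by (simp add: divide_pos_neg)
      then show ?thesis unfolding t_plus_def s_def[symmetric] by (simp add: arctan_less_zero_iff less_imp_le)
    qed
    show ?thesis using tm tp by auto
  next
    case True
    then have epos: "\<epsilon> > 0" .
    have ses: "s < \<epsilon>" using sle epos by simp
    define Xm where "Xm t = ((\<epsilon>-s)*exp t - (\<epsilon>+s)/exp t)/(2*a)" for t
    define Ym where "Ym t = ((\<epsilon>-s)*exp t + (\<epsilon>+s)/exp t)/(2*a)" for t
    define Zm where "Zm t = Ym t - \<epsilon>/a" for t
    have dXm: "(Xm has_real_derivative Ym t) (at t)" for t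
      unfolding Xm_def Ym_def using ef
      by (auto intro!: derivative_eq_intros simp: field_simps power2_eq_square)
    have dYm: "(Ym has_real_derivative Xm t) (at t)" for t
      unfolding Xm_def Ym_def using ef
      by (auto intro!: derivative_eq_intros simp: field_simps power2_eq_square)
    have dZm: "(Zm has_real_derivative Xm t) (at t)" for t
      unfolding Zm_def by (auto intro!: derivative_eq_intros dYm)
    have m1: "((\<lambda>t. xm t $ 1) has_real_derivative xm t $ 2) (at t)" for t
      using comp_deriv[OF xm_ode[of t], of 1] by (simp add: X_minus_def)
    have m2: "((\<lambda>t. xm t $ 2) has_real_derivative (- a * xm t $ 2 + xm t $ 1 + a * xm t $ 3 + \<epsilon>)) (at t)" for t
      using comp_deriv[OF xm_ode[of t], of 2] by (simp add: X_minus_def)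
    have m3: "((\<lambda>t. xm t $ 3) has_real_derivative xm t $ 1) (at t)" for t
      using comp_deriv[OF xm_ode[of t], of 3] by (simp add: X_minus_def)
    have meq: "xm t $ 1 = Xm t \<and> xm t $ 2 = Ym t \<and> xm t $ 3 = Zm t" if "t \<ge> 0" for t
    proof -
      have "(\<lambda>t. xm t $ 1 - Xm t) t = 0 \<and> (\<lambda>t. xm t $ 2 - Ym t) t = 0 \<and> (\<lambda>t. xm t $ 3 - Zm t) t = 0"
      proof (rule uniq3[where ca = "-a" and cb = 1 and cc = a and p = "\<lambda>t. xm t $ 1 - Xm t" and q = "\<lambda>t. xm t $ 2 - Ym t" and r = "\<lambda>t. xm t $ 3 - Zm t"])
        show "((\<lambda>t. xm t $ 1 - Xm t) has_real_derivative xm t $ 2 - Ym t) (at t)" for t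
          by (rule DERIV_diff[OF m1 dXm])
        show "((\<lambda>t. xm t $ 3 - Zm t) has_real_derivative xm t $ 1 - Xm t) (at t)" for t
          by (rule DERIV_diff[OF m3 dZm])
        show "((\<lambda>t. xm t $ 2 - Ym t) has_real_derivative - a * (xm t $ 2 - Ym t) + 1 * (xm t $ 1 - Xm t) + a * (xm t $ 3 - Zm t)) (at t)" for t
          by (rule DERIV_cong[OF DERIV_diff[OF m2 dYm]]) (use ef in \<open>auto simp: Zm_def algebra_simps\<close>)
        show "xm 0 $ 1 - Xm 0 = 0" "xm 0 $ 2 - Ym 0 = 0" "xm 0 $ 3 - Zm 0 = 0"
          using ef unfolding xm_init P_pt_def Xm_def Ym_def Zm_def s_def[symmetric]
          by (auto simp: field_simps)
      qed (rule that)
      then show ?thesis by simp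
    qed
    have partm: "(norm (xm t))^2 < 1" if t: "0 < t" "t < t_minus a \<epsilon>" for t
    proof -
      define u where "u = exp t"
      have u1: "u > 1" unfolding u_def using t by simp
      have rpos: "(s + \<epsilon>) / (\<epsilon> - s) > 0" using ses spos epos by simp
      have "u < (s + \<epsilon>) / (\<epsilon> - s)" unfolding u_def
        using t(2) rpos unfolding t_minus_def s_def[symmetric] by (metis exp_less_cancel_iff exp_ln)
      then have u2: "(\<epsilon> - s) * u - (\<epsilon> + s) < 0" using ses by (simp add: field_simps)
      have Q: "3*(\<epsilon>-s)*u\<^sup>2+2*\<epsilon>*u+3*(\<epsilon>+s) > 0" using ses epos spos u1 by (simp add: add_pos_pos)
      have prod: "(u-1)*((\<epsilon>-s)*u-(\<epsilon>+s))*(3*(\<epsilon>-s)*u\<^sup>2+2*\<epsilon>*u+3*(\<epsilon>+s)) < 0"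
        using u1 u2 Q by (simp add: mult_pos_neg mult_neg_pos)
      have id: "((Xm t)\<^sup>2 + (Ym t)\<^sup>2 + (Zm t)\<^sup>2 - 1) * (4*a\<^sup>2*u\<^sup>2) = (u-1)*((\<epsilon>-s)*u-(\<epsilon>+s))*(3*(\<epsilon>-s)*u\<^sup>2+2*\<epsilon>*u+3*(\<epsilon>+s))"
        unfolding Xm_def Ym_def Zm_def u_def[symmetric]
        by (rule minus_ident) (use ef u1 s2 in auto)
      have "4*a\<^sup>2*u\<^sup>2 > 0" using ef u1 by simp
      then have "(Xm t)\<^sup>2 + (Ym t)\<^sup>2 + (Zm t)\<^sup>2 - 1 < 0" using id prod by (smt (verit) mult_nonneg_nonneg)
      then show ?thesis using meq[of t] t by (simp add: norm3)
    qed
    define Xp where "Xp t = (\<epsilon> * sin t - s * cos t)/a" for t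
    define Yp where "Yp t = (\<epsilon> * cos t + s * sin t)/a" for t
    define Zp where "Zp t = (\<epsilon> - \<epsilon> * cos t - s * sin t)/a" for t
    have dXp: "(Xp has_real_derivative Yp t) (at t)" for t
      unfolding Xp_def Yp_def using ef
      by (auto intro!: derivative_eq_intros simp: field_simps)
    have dYp: "(Yp has_real_derivative - Xp t) (at t)" for t
      unfolding Xp_def Yp_def using ef
      by (auto intro!: derivative_eq_intros simp: field_simps)
    have dZp: "(Zp has_real_derivative Xp t) (at t)" for t
      unfolding Xp_def Zp_def using ef
      by (auto intro!: derivative_eq_intros simp: field_simps)
    have p1: "((\<lambda>t. xp t $ 1) has_real_derivative xp t $ 2) (at t)" for t
      using comp_deriv[OF xp_ode[of t], of 1] by (simp add: X_plus_def)
    have p2: "((\<lambda>t. xp t $ 2) has_real_derivative (- a * xp t $ 2 - xp t $ 1 - a * xp t $ 3 + \<epsilon>)) (at t)" for t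
      using comp_deriv[OF xp_ode[of t], of 2] by (simp add: X_plus_def)
    have p3: "((\<lambda>t. xp t $ 3) has_real_derivative xp t $ 1) (at t)" for t
      using comp_deriv[OF xp_ode[of t], of 3] by (simp add: X_plus_def)
    have peq: "xp t $ 1 = Xp t \<and> xp t $ 2 = Yp t \<and> xp t $ 3 = Zp t" if "t \<ge> 0" for t
    proof -
      have "(\<lambda>t. xp t $ 1 - Xp t) t = 0 \<and> (\<lambda>t. xp t $ 2 - Yp t) t = 0 \<and> (\<lambda>t. xp t $ 3 - Zp t) t = 0"
      proof (rule uniq3[where ca = "-a" and cb = "-1" and cc = "-a" and p = "\<lambda>t. xp t $ 1 - Xp t" and q = "\<lambda>t. xp t $ 2 - Yp t" and r = "\<lambda>t. xp t $ 3 - Zp t"])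
        show "((\<lambda>t. xp t $ 1 - Xp t) has_real_derivative xp t $ 2 - Yp t) (at t)" for t
          by (rule DERIV_diff[OF p1 dXp])
        show "((\<lambda>t. xp t $ 3 - Zp t) has_real_derivative xp t $ 1 - Xp t) (at t)" for t
          by (rule DERIV_diff[OF p3 dZp])
        show "((\<lambda>t. xp t $ 2 - Yp t) has_real_derivative - a * (xp t $ 2 - Yp t) + -1 * (xp t $ 1 - Xp t) + - a * (xp t $ 3 - Zp t)) (at t)" for t
          by (rule DERIV_cong[OF DERIV_diff[OF p2 dYp]]) (use ef in \<open>auto simp: Yp_def Zp_def field_simps\<close>)
        show "xp 0 $ 1 - Xp 0 = 0" "xp 0 $ 2 - Yp 0 = 0" "xp 0 $ 3 - Zp 0 = 0"
          using ef unfolding xp_init P_pt_def Xp_def Yp_def Zp_def s_def[symmetric]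
          by (auto simp: field_simps)
      qed (rule that)
      then show ?thesis by simp
    qed
    have partp: "(norm (xp t))^2 > 1" if t: "0 < t" "t < t_plus a \<epsilon>" for t
    proof -
      define h where "h = t / 2"
      have h0: "0 < h" using t by (simp add: h_def)
      have hlt: "h < arctan (s / \<epsilon>)" using t unfolding h_def t_plus_def s_def[symmetric] by simp
      have hpi: "h < pi / 2" using hlt arctan_ubound[of "s/\<epsilon>"] by linarith
      have sinh: "sin h > 0" using h0 hpi by (intro sin_gt_zero) auto
      have cosh: "cos h > 0" using h0 hpi by (intro cos_gt_zero) auto
      have "arctan (tan h) = h" using h0 hpi by (intro arctan_tan) auto
      then have "tan h < s / \<epsilon>" using hlt by (metis arctan_less_iff)
      then have "sin h / cos h < s / \<epsilon>" by (simp add: tan_def)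
      then have k: "\<epsilon> * sin h < s * cos h" using cosh epos by (simp add: field_simps)
      have tt: "t = 2 * h" by (simp add: h_def)
      have "\<epsilon> * (1 - cos t) - s * sin t = 2 * sin h * (\<epsilon> * sin h - s * cos h)"
        unfolding tt sin_double cos_double_sin by (simp add: algebra_simps power2_eq_square)
      moreover have "2 * sin h * (\<epsilon> * sin h - s * cos h) \<noteq> 0" using sinh k by simp
      ultimately have nz: "(\<epsilon> * (1 - cos t) - s * sin t) / a \<noteq> 0" using ef by simp
      have "(Xp t)\<^sup>2 + (Yp t)\<^sup>2 + (Zp t)\<^sup>2 = 1 + ((\<epsilon> * (1 - cos t) - s * sin t)/a)\<^sup>2"
        unfolding Xp_def Yp_def Zp_def by (rule plus_ident) (use ef s2 in auto)
      moreover have "((\<epsilon> * (1 - cos t) - s * sin t)/a)\<^sup>2 > 0" using nz by simp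
      ultimately show ?thesis using peq[of t] t by (simp add: norm3)
    qed
    show ?thesis using partm partp by auto
  qed
qed

end
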